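(* Let $G$ be a finite undirected graph, $\tau\ge1$ an integer, and $e=(u,v)\in E(G)$. Then for every $w\in\Delta_{\lfloor\tau/2\rfloor}(e,G)$ we have $\phi_\tau(e,G)\ge|V(\Omega(w))|$; i.e. $\phi_\tau(e,G)\ge\max\{|V(\Omega(w))| : w\in\Delta_{\lfloor\tau/2\rfloor}(e,G)\}$.
   Context: Graphs are finite, simple, undirected and unweighted; paths may repeat vertices and their length is the number of edges. For vertices $v,u$ of a graph $H$, $u$ is $t$-hop reachable from $v$ in $H$ (written $u\rightarrow_t v$) if there is a path between them in $H$ of length at most $t$. $N_t(v,H)$ is the set of vertices $u\ne v$ that are $t$-hop reachable from $v$ in $H$. For an edge $e=(u,v)$ of $H$, $\Delta_t(e,H)=N_t(u,H)\cap N_t(v,H)$ and $\mathrm{sup}_t(e,H)=|\Delta_t(e,H)|$. The $(k,\tau)$-truss of $G$ is the maximal subgraph $G'$ of $G$ such that $\mathrm{sup}_\tau(e,G')\ge k-2$ for every $e\in E(G')$ (supports computed inside $G'$) and no more edges of $G$ can be added while keeping this property. The higher-order truss number $\phi_\tau(e,G)$ is the maximum $k$ such that $e$ belongs to the $(k,\tau)$-truss of $G$. For a vertex $w$, $\Omega(w)$ is the subgraph of $G$ induced by $\{w\}\cup\{x : x\rightarrow_{\lfloor\tau/2\rfloor} w \text{ in } G\}$. *)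

theory Defs
  imports Main
begin

definition simple_graph :: "'a set \<Rightarrow> 'a set set \<Rightarrow> bool" where
  "simple_graph V E \<longleftrightarrow> finite V \<and> (\<forall>e\<in>E. e \<subseteq> V \<and> card e = 2)"

fun is_walk :: "'a set set \<Rightarrow> 'a list \<Rightarrow> bool" where
  "is_walk F [] = False"
| "is_walk F [x] = True"
| "is_walk F (x # y # xs) = ({x, y} \<in> F \<and> is_walk F (y # xs))"

definition hop_reach :: "'a set set \<Rightarrow> nat \<Rightarrow> 'a \<Rightarrow> 'a \<Rightarrow> bool" where
  "hop_reach F t v u \<longleftrightarrow>
     (\<exists>xs. is_walk F xs \<and> hd xs = v \<and> last xs = u \<and> length xs - 1 \<le> t)"

definition Nhop :: "'a set set \<Rightarrow> nat \<Rightarrow> 'a \<Rightarrow> 'a set" where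
  "Nhop F t v = {u. u \<noteq> v \<and> hop_reach F t v u}"

definition Delta :: "'a set set \<Rightarrow> nat \<Rightarrow> 'a \<Rightarrow> 'a \<Rightarrow> 'a set" where
  "Delta F t u v = Nhop F t u \<inter> Nhop F t v"

definition sup_t :: "'a set set \<Rightarrow> nat \<Rightarrow> 'a \<Rightarrow> 'a \<Rightarrow> nat" where
  "sup_t F t u v = card (Delta F t u v)"

text \<open>Isolated vertices do not affect reachability, so a
  subgraph is determined (for this purpose) by its edge set.\<close>
definition truss_valid :: "'a set set \<Rightarrow> nat \<Rightarrow> nat \<Rightarrow> 'a set set \<Rightarrow> bool" where
  "truss_valid E k \<tau> F \<longleftrightarrow> F \<subseteq> E \<and>
     (\<forall>x y. {x, y} \<in> F \<longrightarrow> x \<noteq> y \<longrightarrow> int (sup_t F \<tau> x y) \<ge> int k - 2)"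

definition truss :: "'a set set \<Rightarrow> nat \<Rightarrow> nat \<Rightarrow> 'a set set" where
  "truss E k \<tau> = \<Union>{F. truss_valid E k \<tau> F}"

definition truss_number :: "'a set set \<Rightarrow> nat \<Rightarrow> 'a \<Rightarrow> 'a \<Rightarrow> nat" where
  "truss_number E \<tau> u v = (GREATEST k. {u, v} \<in> truss E k \<tau>)"

definition Omega_verts :: "'a set set \<Rightarrow> nat \<Rightarrow> 'a \<Rightarrow> 'a set" where
  "Omega_verts E \<tau> w = {w} \<union> {x. hop_reach E (\<tau> div 2) w x}"

end

theory Submission
  imports Defs
begin

lemma walk_app:
  "is_walk F xs \<Longrightarrow> is_walk F ys \<Longrightarrow> last xs = hd ys \<Longrightarrow> is_walk F (xs @ tl ys)"
proof (induction F xs rule: is_walk.induct)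
  case (2 F x)
  then show ?case by (cases ys) auto
qed auto

lemma walk_snoc: "is_walk F xs \<Longrightarrow> {last xs, y} \<in> F \<Longrightarrow> is_walk F (xs @ [y])"
  by (induction F xs rule: is_walk.induct) auto

lemma walk_rev: "is_walk F xs \<Longrightarrow> is_walk F (rev xs)"
proof (induction F xs rule: is_walk.induct)
  case (3 F x y xs)
  then have "is_walk F (rev (y # xs))" by simp
  moreover have "last (rev (y # xs)) = y" by simp
  moreover have "{y, x} \<in> F" using 3 by (simp add: insert_commute)
  ultimately show ?case using walk_snoc[of F "rev (y#xs)" x] by simp
qed auto

lemma walk_ne: "is_walk F xs \<Longrightarrow> xs \<noteq> []"
  by (cases xs) auto

lemma walk_tl: "is_walk F xs \<Longrightarrow> set (tl xs) \<subseteq> \<Union>F"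
  by (induction F xs rule: is_walk.induct) auto

lemma walk_take: "is_walk F xs \<Longrightarrow> n > 0 \<Longrightarrow> is_walk F (take n xs)"
proof (induction F xs arbitrary: n rule: is_walk.induct)
  case (3 F x y xs)
  then show ?case
  proof (cases n)
    case (Suc m)
    show ?thesis
    proof (cases m)
      case 0 then show ?thesis using Suc by simp
    next
      case (Suc k)
      have "is_walk F (take (Suc k) (y # xs))" using 3(1)[of "Suc k"] 3(2)[simplified] 3(3) by simp
      then show ?thesis using Suc \<open>n = Suc m\<close> 3(2) by simp
    qed
  qed simp
qed auto

lemma walk_restrict: "is_walk E xs \<Longrightarrow> set xs \<subseteq> S \<Longrightarrow> is_walk {e\<in>E. e \<subseteq> S} xs"
  by (induction E xs rule: is_walk.induct) auto

lemma reach_refl: "hop_reach F t v v"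
  unfolding hop_reach_def by (rule exI[of _ "[v]"]) auto

lemma reach_sym: "hop_reach F t v u \<Longrightarrow> hop_reach F t u v"
  unfolding hop_reach_def
  by (metis walk_rev walk_ne hd_rev last_rev length_rev)

lemma reach_trans: "hop_reach F a x y \<Longrightarrow> hop_reach F b y z \<Longrightarrow> hop_reach F (a+b) x z"
proof -
  assume "hop_reach F a x y" "hop_reach F b y z"
  then obtain xs ys where xs: "is_walk F xs" "hd xs = x" "last xs = y" "length xs - 1 \<le> a"
    and ys: "is_walk F ys" "hd ys = y" "last ys = z" "length ys - 1 \<le> b"
    unfolding hop_reach_def by blast
  have ne: "xs \<noteq> []" "ys \<noteq> []" using xs ys walk_ne by auto
  have "is_walk F (xs @ tl ys)" using walk_app[OF xs(1) ys(1)] xs(3) ys(2) by simp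
  moreover have "hd (xs @ tl ys) = x" using ne xs by simp
  moreover have "last (xs @ tl ys) = z"
    using ne xs ys by (cases ys) (auto split: if_splits)
  moreover have "length (xs @ tl ys) - 1 \<le> a + b" using ne xs ys by (cases ys) auto
  ultimately show ?thesis unfolding hop_reach_def by blast
qed

lemma reach_mono: "hop_reach F a x y \<Longrightarrow> a \<le> b \<Longrightarrow> hop_reach F b x y"
  unfolding hop_reach_def by fastforce

lemma reach_in: "hop_reach F t v u \<Longrightarrow> u \<noteq> v \<Longrightarrow> u \<in> \<Union>F"
  unfolding hop_reach_def
proof (elim exE conjE)
  fix xs assume "is_walk F xs" "hd xs = v" "last xs = u" "u \<noteq> v"
  then show "u \<in> \<Union>F"
    using walk_tl[of F xs] walk_ne[of F xs]
    by (cases xs) (auto split: if_splits intro: last_in_set)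
qed

lemma reach_nth: "is_walk F xs \<Longrightarrow> i < length xs \<Longrightarrow> hop_reach F i (hd xs) (xs ! i)"
  unfolding hop_reach_def
proof (intro exI conjI)
  assume a: "is_walk F xs" "i < length xs"
  show "is_walk F (take (Suc i) xs)" using walk_take a by blast
  show "hd (take (Suc i) xs) = hd xs" using a by (cases xs) auto
  show "last (take (Suc i) xs) = xs ! i" using a by (simp add: take_Suc_conv_app_nth)
  show "length (take (Suc i) xs) - 1 \<le> i" by simp
qed

lemma unionE_sub: "simple_graph V E \<Longrightarrow> F \<subseteq> E \<Longrightarrow> \<Union>F \<subseteq> V"
  unfolding simple_graph_def by blast

lemma Delta_sub: "simple_graph V E \<Longrightarrow> F \<subseteq> E \<Longrightarrow> Delta F t x y \<subseteq> V"
  unfolding Delta_def Nhop_def using reach_in unionE_sub by fastforce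

lemma truss_bound:
  assumes "simple_graph V E" "{u, v} \<in> truss E k \<tau>"
  shows "k \<le> card V + 2"
proof -
  obtain F where F: "truss_valid E k \<tau> F" "{u,v} \<in> F"
    using assms(2) unfolding truss_def by blast
  have "F \<subseteq> E" using F unfolding truss_valid_def by blast
  then have "card {u,v} = 2" using assms(1) F unfolding simple_graph_def by blast
  then have "u \<noteq> v" by (cases "u = v") auto
  then have "int (sup_t F \<tau> u v) \<ge> int k - 2" using F unfolding truss_valid_def by blast
  moreover have "sup_t F \<tau> u v \<le> card V"
    unfolding sup_t_def using Delta_sub[OF assms(1) \<open>F \<subseteq> E\<close>] assms(1)
    by (simp add: card_mono simple_graph_def)
  ultimately show ?thesis by linarith
qed

theorem lemma5:
  fixes V :: "'a set" and E :: "'a set set" and \<tau> :: nat and u v w :: 'a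
  assumes "simple_graph V E"
    and "\<tau> \<ge> 1"
    and "{u, v} \<in> E"
    and "w \<in> Delta E (\<tau> div 2) u v"
  shows "truss_number E \<tau> u v \<ge> card (Omega_verts E \<tau> w)"
proof -
  define t where "t = \<tau> div 2"
  define Om where "Om = Omega_verts E \<tau> w"
  define F where "F = {e\<in>E. e \<subseteq> Om}"
  have FE: "F \<subseteq> E" unfolding F_def by blast
  have A: "hop_reach F t w x" if "x \<in> Om" for x
  proof -
    have "hop_reach E t w x" using that reach_refl
      unfolding Om_def Omega_verts_def t_def by auto
    then obtain xs where xs: "is_walk E xs" "hd xs = w" "last xs = x" "length xs - 1 \<le> t"
      unfolding hop_reach_def by blast
    have "set xs \<subseteq> Om"
    proof
      fix z assume "z \<in> set xs"
      then obtain i where i: "i < length xs" "xs ! i = z" by (auto simp: in_set_conv_nth)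
      then have "hop_reach E i w z" using reach_nth[OF xs(1) i(1)] xs(2) i(2) by simp
      moreover have "i \<le> t" using i xs(4) by linarith
      ultimately have "hop_reach E t w z" by (rule reach_mono)
      then show "z \<in> Om" unfolding Om_def Omega_verts_def t_def by auto
    qed
    then have "is_walk F xs" using walk_restrict xs(1) unfolding F_def by blast
    then show ?thesis using xs unfolding hop_reach_def by blast
  qed
  have B: "hop_reach F \<tau> x z" if "x \<in> Om" "z \<in> Om" for x z
  proof -
    have "hop_reach F t x w" using reach_sym[OF A[OF that(1)]] .
    then have "hop_reach F (t+t) x z" using reach_trans[OF _ A[OF that(2)]] by blast
    moreover have "t + t \<le> \<tau>" unfolding t_def by simp
    ultimately show ?thesis by (rule reach_mono)
  qed
  have valid: "truss_valid E (card Om) \<tau> F"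
    unfolding truss_valid_def
  proof (intro conjI FE allI impI)
    fix x y assume xy: "{x, y} \<in> F" "x \<noteq> y"
    then have xyO: "x \<in> Om" "y \<in> Om" unfolding F_def by auto
    have sub: "Om - {x,y} \<subseteq> Delta F \<tau> x y"
      unfolding Delta_def Nhop_def using B[OF xyO(1)] B[OF xyO(2)] by blast
    have fin: "finite (Delta F \<tau> x y)"
      using finite_subset[OF Delta_sub[OF assms(1) FE]] assms(1) unfolding simple_graph_def by blast
    have "card (Om - {x,y}) \<le> sup_t F \<tau> x y"
      unfolding sup_t_def using card_mono[OF fin sub] .
    moreover have "card Om - card {x,y} \<le> card (Om - {x,y})"
      by (rule diff_card_le_card_Diff) simp
    moreover have "card {x,y} = 2" using xy by simp
    ultimately show "int (sup_t F \<tau> x y) \<ge> int (card Om) - 2" by linarith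
  qed
  have "hop_reach E (\<tau> div 2) u w" "hop_reach E (\<tau> div 2) v w"
    using assms(4) unfolding Delta_def Nhop_def by auto
  then have uvO: "u \<in> Om" "v \<in> Om"
    using reach_sym[of E "\<tau> div 2"] unfolding Om_def Omega_verts_def by blast+
  have "{u,v} \<in> F" using assms(3) uvO unfolding F_def by auto
  then have "{u,v} \<in> truss E (card Om) \<tau>"
    using valid unfolding truss_def by blast
  moreover have "\<forall>k. {u,v} \<in> truss E k \<tau> \<longrightarrow> k \<le> card V + 2"
    using truss_bound[OF assms(1)] by blast
  ultimately have "card Om \<le> (GREATEST k. {u,v} \<in> truss E k \<tau>)"
    using Greatest_le_nat[where P="\<lambda>k. {u,v} \<in> truss E k \<tau>" and b="card V + 2"] by blast
  then show ?thesis unfolding truss_number_def Om_def .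
qed

end
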